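(* Let $n\ge3$, $\xi\in[0,1]$, and consider the star-to-complete network with adjacency matrix $\mathbf A^\xi$, $\theta_i=1$ for all $i$, and $F(p)=p$ on $[0,1]$. If the optimal value of problem (P4) (mixed-autonomy system) is strictly greater than the optimal value of (P4) with the additional constraint $z_i=0$ for all $i$ (human-only system), then $k=s/\omega\le1-\beta$.
   Context: Star-to-complete network: for $n\ge3$ and $\xi\in[0,1]$, $\mathbf A^\xi=[\alpha_{ij}]$ is the $n\times n$ matrix with $\alpha_{ii}=0$ for all $i$, $\alpha_{1j}=\frac1{n-1}$ for $j\ne1$, $\alpha_{i1}=c_1:=\frac{\xi}{n-1}+(1-\xi)$ for $i\ne1$, and $\alpha_{ij}=c_2:=\frac{\xi}{n-1}$ for $i,j\ne1$, $i\ne j$. Parameters: $\beta\in(0,1)$ (probability a driver remains in the platform each period), $\omega>0$ (drivers' lifetime outside-option earnings), $s\ge0$ (cost of operating an autonomous vehicle for a driver's expected lifetime), $k=s/\omega$. Problem (P4): maximize over $\{p_i,\delta_i,x_i,y_{ij},z_i,r_{ij}\}$ the objective $\sum_i p_i\theta_i(1-F(p_i))-\omega\sum_i\delta_i-s\sum_i z_i$ subject to, for all $i$: $d_i=\theta_i(1-F(p_i))$; $x_i=\beta\big[\sum_j\alpha_{ji}\min\{x_j,d_j\}+\sum_j y_{ji}\big]+\delta_i$; $\sum_j y_{ij}=\max\{x_i-d_i,0\}$; $z_i=\sum_j\alpha_{ji}\max\{d_j-x_j,0\}+\sum_j r_{ji}$; $\sum_j r_{ij}=z_i-\max\{d_i-x_i,0\}$;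 all variables nonnegative. *)

theory Defs
  imports Complex_Main
begin

text \<open>Nodes are indexed 0,...,n-1; node 0 is the hub of the star
  (node 1 in the paper).\<close>

definition star_complete :: "nat \<Rightarrow> real \<Rightarrow> nat \<Rightarrow> nat \<Rightarrow> real" where
  "star_complete n \<xi> i j =
     (if i = j then 0
      else if i = 0 then 1 / (real n - 1)
      else if j = 0 then \<xi> / (real n - 1) + (1 - \<xi>)
      else \<xi> / (real n - 1))"

definition F_unif :: "real \<Rightarrow> real" where
  "F_unif p = min 1 (max 0 p)"

definition P4_feasible ::
  "nat \<Rightarrow> (nat \<Rightarrow> nat \<Rightarrow> real) \<Rightarrow> (nat \<Rightarrow> real) \<Rightarrow> (real \<Rightarrow> real) \<Rightarrow> real \<Rightarrow>
   (nat \<Rightarrow> real) \<Rightarrow> (nat \<Rightarrow> real) \<Rightarrow> (nat \<Rightarrow> real) \<Rightarrow> (nat \<Rightarrow> nat \<Rightarrow> real) \<Rightarrow>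
   (nat \<Rightarrow> real) \<Rightarrow> (nat \<Rightarrow> nat \<Rightarrow> real) \<Rightarrow> bool" where
  "P4_feasible n \<alpha> \<theta> F \<beta> p \<delta> x y z r \<longleftrightarrow>
     (\<forall>i<n.
        (let d = (\<lambda>k. \<theta> k * (1 - F (p k))) in
          x i = \<beta> * ((\<Sum>j<n. \<alpha> j i * min (x j) (d j)) + (\<Sum>j<n. y j i)) + \<delta> i
        \<and> (\<Sum>j<n. y i j) = max (x i - d i) 0
        \<and> z i = (\<Sum>j<n. \<alpha> j i * max (d j - x j) 0) + (\<Sum>j<n. r j i)
        \<and> (\<Sum>j<n. r i j) = z i - max (d i - x i) 0
        \<and> d i \<ge> 0
        \<and> p i \<ge> 0 \<and> \<delta> i \<ge> 0 \<and> x i \<ge> 0 \<and> z i \<ge> 0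
        \<and> (\<forall>j<n. y i j \<ge> 0 \<and> r i j \<ge> 0)))"

definition P4_objective ::
  "nat \<Rightarrow> (nat \<Rightarrow> real) \<Rightarrow> (real \<Rightarrow> real) \<Rightarrow> real \<Rightarrow> real \<Rightarrow>
   (nat \<Rightarrow> real) \<Rightarrow> (nat \<Rightarrow> real) \<Rightarrow> (nat \<Rightarrow> real) \<Rightarrow> real" where
  "P4_objective n \<theta> F \<omega> s p \<delta> z =
     (\<Sum>i<n. p i * \<theta> i * (1 - F (p i))) - \<omega> * (\<Sum>i<n. \<delta> i) - s * (\<Sum>i<n. z i)"

definition P4_value ::
  "nat \<Rightarrow> (nat \<Rightarrow> nat \<Rightarrow> real) \<Rightarrow> (nat \<Rightarrow> real) \<Rightarrow> (real \<Rightarrow> real) \<Rightarrow> real \<Rightarrow> real \<Rightarrow> real \<Rightarrow>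
   bool \<Rightarrow> real" where
  "P4_value n \<alpha> \<theta> F \<beta> \<omega> s human_only =
     Sup {P4_objective n \<theta> F \<omega> s p \<delta> z | p \<delta> x y z r.
            P4_feasible n \<alpha> \<theta> F \<beta> p \<delta> x y z r \<and> (human_only \<longrightarrow> (\<forall>i<n. z i = 0))}"

end

theory Submission
  imports Defs
begin

lemma replace_avs:
  assumes feas: "P4_feasible n \<alpha> \<theta> F \<beta> p \<delta> x y z r"
    and sb: "(1 - \<beta>) * \<omega> \<le> s" and b1: "\<beta> \<le> 1" and w: "\<omega> \<ge> 0"
  shows "\<exists>\<delta>' x' y' z' r'. P4_feasible n \<alpha> \<theta> F \<beta> p \<delta>' x' y' z' r' \<and> (\<forall>i<n. z' i = 0)
     \<and> P4_objective n \<theta> F \<omega> s p \<delta> z \<le> P4_objective n \<theta> F \<omega> s p \<delta>' z'"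
proof -
  define d where "d = (\<lambda>k. \<theta> k * (1 - F (p k)))"
  define x' where "x' = (\<lambda>i. x i + z i)"
  define y' where "y' = (\<lambda>i j. y i j + r i j)"
  define \<delta>' where "\<delta>' = (\<lambda>i. \<delta> i + (1 - \<beta>) * z i)"
  have F: "\<And>i. i < n \<Longrightarrow>
          x i = \<beta> * ((\<Sum>j<n. \<alpha> j i * min (x j) (d j)) + (\<Sum>j<n. y j i)) + \<delta> i
        \<and> (\<Sum>j<n. y i j) = max (x i - d i) 0
        \<and> z i = (\<Sum>j<n. \<alpha> j i * max (d j - x j) 0) + (\<Sum>j<n. r j i)
        \<and> (\<Sum>j<n. r i j) = z i - max (d i - x i) 0
        \<and> d i \<ge> 0
        \<and> p i \<ge> 0 \<and> \<delta> i \<ge> 0 \<and> x i \<ge> 0 \<and> z i \<ge> 0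
        \<and> (\<forall>j<n. y i j \<ge> 0 \<and> r i j \<ge> 0)"
    using feas unfolding P4_feasible_def d_def Let_def by blast
  have ge: "x' i \<ge> d i" if "i < n" for i
  proof -
    have "\<forall>j<n. r i j \<ge> 0" using F[OF that] by blast
    then have "(\<Sum>j<n. r i j) \<ge> 0" by (intro sum_nonneg) auto
    moreover have "(\<Sum>j<n. r i j) = z i - max (d i - x i) 0" using F[OF that] by blast
    ultimately have "z i \<ge> d i - x i" by linarith
    then show ?thesis unfolding x'_def by linarith
  qed
  have mn: "min (x' j) (d j) = min (x j) (d j) + max (d j - x j) 0" if "j < n" for j
    using ge[OF that] by (auto simp: min_def max_def)
  have feas': "P4_feasible n \<alpha> \<theta> F \<beta> p \<delta>' x' y' (\<lambda>_. 0) (\<lambda>_ _. 0)"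
    unfolding P4_feasible_def Let_def d_def[symmetric]
  proof (intro allI impI conjI)
    fix i assume i: "i < n"
    note Fi = F[OF i]
    have e1: "x i = \<beta> * ((\<Sum>j<n. \<alpha> j i * min (x j) (d j)) + (\<Sum>j<n. y j i)) + \<delta> i"
      using Fi by blast
    have e2: "(\<Sum>j<n. y i j) = max (x i - d i) 0" using Fi by blast
    have e3: "z i = (\<Sum>j<n. \<alpha> j i * max (d j - x j) 0) + (\<Sum>j<n. r j i)" using Fi by blast
    have e4: "(\<Sum>j<n. r i j) = z i - max (d i - x i) 0" using Fi by blast
    have nn: "d i \<ge> 0" "p i \<ge> 0" "\<delta> i \<ge> 0" "x i \<ge> 0" "z i \<ge> 0" using Fi by blast+
    have s1: "(\<Sum>j<n. \<alpha> j i * min (x' j) (d j)) = (\<Sum>j<n. \<alpha> j i * min (x j) (d j)) + (\<Sum>j<n. \<alpha> j i * max (d j - x j) 0)"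
      unfolding sum.distrib[symmetric] by (rule sum.cong) (auto simp: mn distrib_left)
    have s2: "(\<Sum>j<n. y' j i) = (\<Sum>j<n. y j i) + (\<Sum>j<n. r j i)"
      unfolding y'_def by (rule sum.distrib)
    have s3: "(\<Sum>j<n. y' i j) = (\<Sum>j<n. y i j) + (\<Sum>j<n. r i j)"
      unfolding y'_def by (rule sum.distrib)
    define A where "A = (\<Sum>j<n. \<alpha> j i * min (x j) (d j))"
    define M where "M = (\<Sum>j<n. \<alpha> j i * max (d j - x j) 0)"
    define Y where "Y = (\<Sum>j<n. y j i)"
    define R where "R = (\<Sum>j<n. r j i)"
    have k: "\<beta> * ((A + M) + (Y + R)) = \<beta> * (A + Y) + \<beta> * (M + R)"
      by (simp add: algebra_simps)
    show "x' i = \<beta> * ((\<Sum>j<n. \<alpha> j i * min (x' j) (d j)) + (\<Sum>j<n. y' j i)) + \<delta>' i"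
      unfolding s1 s2 A_def[symmetric] M_def[symmetric] Y_def[symmetric] R_def[symmetric] k
      using e1 e3 unfolding x'_def \<delta>'_def A_def[symmetric] M_def[symmetric] Y_def[symmetric] R_def[symmetric]
      by (simp add: algebra_simps)
    have gi: "x' i \<ge> d i" by (rule ge[OF i])
    show "(\<Sum>j<n. y' i j) = max (x' i - d i) 0"
      unfolding s3 e2 e4 using gi unfolding x'_def by (simp add: max_def)
    have "(\<Sum>j<n. \<alpha> j i * max (d j - x' j) 0) = 0"
      by (rule sum.neutral) (use ge in \<open>simp add: max_def\<close>)
    then show "(0::real) = (\<Sum>j<n. \<alpha> j i * max (d j - x' j) 0) + (\<Sum>j<n. 0)"
      by simp
    show "(\<Sum>j<n. (0::real)) = 0 - max (d i - x' i) 0"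
      using gi by (simp add: max_def)
    show "d i \<ge> 0" "p i \<ge> 0" using nn by auto
    show "\<delta>' i \<ge> 0" using nn b1 unfolding \<delta>'_def by simp
    show "x' i \<ge> 0" using nn unfolding x'_def by simp
    show "(0::real) \<le> 0" by simp
    fix j assume j: "j < n"
    have "y i j \<ge> 0" "r i j \<ge> 0" using Fi j by blast+
    then show "y' i j \<ge> 0" "(0::real) \<le> 0" unfolding y'_def by auto
  qed
  have "\<forall>i<n. z i \<ge> 0" using F by blast
  then have zs: "(\<Sum>i<n. z i) \<ge> 0" by (intro sum_nonneg) auto
  have "\<omega> * (\<Sum>i<n. \<delta>' i) = \<omega> * (\<Sum>i<n. \<delta> i) + ((1 - \<beta>) * \<omega>) * (\<Sum>i<n. z i)"
    unfolding \<delta>'_def sum.distrib sum_distrib_left[symmetric] by (simp add: algebra_simps)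
  moreover have "((1 - \<beta>) * \<omega>) * (\<Sum>i<n. z i) \<le> s * (\<Sum>i<n. z i)"
    using sb zs by (simp add: mult_right_mono)
  ultimately have "P4_objective n \<theta> F \<omega> s p \<delta> z \<le> P4_objective n \<theta> F \<omega> s p \<delta>' (\<lambda>_. 0)"
    unfolding P4_objective_def by simp
  then show ?thesis using feas' by blast
qed

theorem proposition1:
  fixes n :: nat and \<xi> \<beta> \<omega> s :: real
  assumes "n \<ge> 3" and "0 \<le> \<xi>" and "\<xi> \<le> 1"
    and "0 < \<beta>" and "\<beta> < 1" and "\<omega> > 0" and "s \<ge> 0"
    and "P4_value n (star_complete n \<xi>) (\<lambda>_. 1) F_unif \<beta> \<omega> s False
         > P4_value n (star_complete n \<xi>) (\<lambda>_. 1) F_unif \<beta> \<omega> s True"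
  shows "s / \<omega> \<le> 1 - \<beta>"
proof (rule ccontr)
  assume "\<not> s / \<omega> \<le> 1 - \<beta>"
  then have sb: "(1 - \<beta>) * \<omega> \<le> s" using assms(6) by (simp add: field_simps)
  let ?\<alpha> = "star_complete n \<xi>"
  let ?\<theta> = "\<lambda>_::nat. 1::real"
  define A where "A = {P4_objective n ?\<theta> F_unif \<omega> s p \<delta> z | p \<delta> x y z r.
            P4_feasible n ?\<alpha> ?\<theta> F_unif \<beta> p \<delta> x y z r \<and> (False \<longrightarrow> (\<forall>i<n. z i = 0))}"
  define B where "B = {P4_objective n ?\<theta> F_unif \<omega> s p \<delta> z | p \<delta> x y z r.
            P4_feasible n ?\<alpha> ?\<theta> F_unif \<beta> p \<delta> x y z r \<and> (True \<longrightarrow> (\<forall>i<n. z i = 0))}"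
  have rev: "p * (1 - F_unif p) \<le> 1" if "p \<ge> 0" for p
  proof (cases "p \<le> 1")
    case True
    then have "p * (1 - F_unif p) = p * (1 - p)" using that by (simp add: F_unif_def)
    also have "\<dots> \<le> 1" using True that mult_left_mono[of "1 - p" 1 p] by simp
    finally show ?thesis .
  next
    case False then show ?thesis by (simp add: F_unif_def)
  qed
  have bdd: "bdd_above B"
  proof (rule bdd_aboveI)
    fix b assume "b \<in> B"
    then obtain p \<delta> x y z r where b: "b = P4_objective n ?\<theta> F_unif \<omega> s p \<delta> z"
      and f: "P4_feasible n ?\<alpha> ?\<theta> F_unif \<beta> p \<delta> x y z r" unfolding B_def by blast
    have nn: "\<forall>i<n. p i \<ge> 0 \<and> \<delta> i \<ge> 0 \<and> z i \<ge> 0"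
      using f unfolding P4_feasible_def Let_def by blast
    have "(\<Sum>i<n. \<delta> i) \<ge> 0" by (rule sum_nonneg) (use nn in auto)
    moreover have "(\<Sum>i<n. z i) \<ge> 0" by (rule sum_nonneg) (use nn in auto)
    moreover have "(\<Sum>i<n. p i * 1 * (1 - F_unif (p i))) \<le> (\<Sum>i<n. 1)"
      by (rule sum_mono) (use nn rev in auto)
    ultimately show "b \<le> real n"
      unfolding b P4_objective_def using assms(6,7)
      by (simp add: mult_nonneg_nonneg) (smt (verit) mult_nonneg_nonneg)
  qed
  have ne: "A \<noteq> {}"
  proof -
    have "P4_feasible n ?\<alpha> ?\<theta> F_unif \<beta> (\<lambda>_. 1) (\<lambda>_. 0) (\<lambda>_. 0) (\<lambda>_ _. 0) (\<lambda>_. 0) (\<lambda>_ _. 0)"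
      unfolding P4_feasible_def Let_def by (simp add: F_unif_def)
    then show ?thesis unfolding A_def by blast
  qed
  have "Sup A \<le> Sup B"
  proof (rule cSup_least[OF ne])
    fix a assume "a \<in> A"
    then obtain p \<delta> x y z r where a: "a = P4_objective n ?\<theta> F_unif \<omega> s p \<delta> z"
      and f: "P4_feasible n ?\<alpha> ?\<theta> F_unif \<beta> p \<delta> x y z r" unfolding A_def by blast
    obtain \<delta>' x' y' z' r' where f': "P4_feasible n ?\<alpha> ?\<theta> F_unif \<beta> p \<delta>' x' y' z' r'"
      and z': "\<forall>i<n. z' i = 0"
      and le: "a \<le> P4_objective n ?\<theta> F_unif \<omega> s p \<delta>' z'"
      using replace_avs[OF f sb] assms(5,6) a by fastforce
    have "P4_objective n ?\<theta> F_unif \<omega> s p \<delta>' z' \<in> B" unfolding B_def using f' z' by blast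
    then show "a \<le> Sup B" using le cSup_upper[OF _ bdd] by (meson order_trans)
  qed
  then show False using assms(8) unfolding P4_value_def A_def B_def by simp
qed

end
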